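(* Let $\Omega$ be a finite set and let $\mathcal{F}_{+}$ denote the set of nonnegative, increasing set functions $f:2^{\Omega}\to\mathbb{R}$. Let $\zeta:\mathcal{F}_{+}\to\mathbb{R}$ be any one of the following: (I) $\zeta[f]=\mathcal{E}[f]$; (II) $\zeta[f]=D[f]$; (III) $\zeta[f]=d^{\ell,k}[f]$ for some fixed $\ell\in\{0,\dots,|\Omega|-1\}$, $k\in\{0,\dots,|\Omega|\}$; (IV) $\zeta[f]=\Delta^{L,K}[f]$ for some fixed $L\in\{0,\dots,|\Omega|-1\}$, $K\in\{1,\dots,|\Omega|\}$. Then: (i) $\zeta$ is sublinear: for all $f_1,f_2\in\mathcal{F}_{+}$, $\zeta[f_1]+\zeta[f_2]\ge\zeta[f_1+f_2]$, and for all $f\in\mathcal{F}_{+}$ and $\alpha\in\mathbb{R}_{+}$, $\alpha\zeta[f]=\zeta[\alpha f]$. (ii) In cases (I), (II), (III): if $f\in\mathcal{F}_{+}$ is not submodular, then for any $\epsilon\in[0,\zeta[f])$ there does not exist a nonnegative, increasing, submodular function $g:2^{\Omega}\to\mathbb{R}$ with $\|g-f\|_{\infty}<\epsilon/4$.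
   Context: A set function $f$ is increasing if $f(\mathcal{A})\le f(\mathcal{B})$ whenever $\mathcal{A}\subseteq\mathcal{B}$; it is submodular if $f(\mathcal{A}\cup\mathcal{B})+f(\mathcal{A}\cap\mathcal{B})\le f(\mathcal{A})+f(\mathcal{B})$ for all $\mathcal{A},\mathcal{B}\subseteq\Omega$. Definitions: $\mathcal{E}[f]=\max_{\mathcal{A},\mathcal{B}\subseteq\Omega} f(\mathcal{A}\cup\mathcal{B})+f(\mathcal{A}\cap\mathcal{B})-f(\mathcal{A})-f(\mathcal{B})$. For $\ell\in\{0,\dots,|\Omega|-1\}$, $k\in\{0,\dots,|\Omega|\}$, $d^{\ell,k}[f]=\max\{f(\mathcal{A}\cup\mathcal{B}\cup\{s\})-f(\mathcal{A}\cup\mathcal{B})-f(\mathcal{A}\cup\{s\})+f(\mathcal{A}) : \mathcal{A},\mathcal{B}\subseteq\Omega, s\in\Omega, |\mathcal{A}|=\ell,|\mathcal{B}|=k\}$. $D[f]=\max\{d^{\ell,k}[f]:\ell\in\{0,\dots,|\Omega|-1\},k\in\{0,\dots,|\Omega|\}\}$. For $K\in\{1,\dots,|\Omega|\}$, $\delta^{\ell,K}[f]=\sum_{k=0}^{K-1}d^{\ell,k}[f]$, and $\Delta^{L,K}[f]=\max_{\ell\in\{0,\dots,L\}}\delta^{\ell,K}[f]$. $\|h\|_\infty=\max_{\mathcal{S}\subseteq\Omega}|h(\mathcal{S})|$. *)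

theory Defs
  imports Complex_Main
begin

text \<open>Ground set Omega = UNIV of a finite type 'a; set functions are 'a set => real.\<close>

definition increasing_sf :: "('a set \<Rightarrow> real) \<Rightarrow> bool" where
  "increasing_sf f \<longleftrightarrow> (\<forall>A B. A \<subseteq> B \<longrightarrow> f A \<le> f B)"

definition submodular_sf :: "('a set \<Rightarrow> real) \<Rightarrow> bool" where
  "submodular_sf f \<longleftrightarrow> (\<forall>A B. f (A \<union> B) + f (A \<inter> B) \<le> f A + f B)"

definition nonneg_sf :: "('a set \<Rightarrow> real) \<Rightarrow> bool" where
  "nonneg_sf f \<longleftrightarrow> (\<forall>S. 0 \<le> f S)"

definition Fplus :: "('a set \<Rightarrow> real) \<Rightarrow> bool" where
  "Fplus f \<longleftrightarrow> nonneg_sf f \<and> increasing_sf f"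

definition Esub :: "('a::finite set \<Rightarrow> real) \<Rightarrow> real" where
  "Esub f = Max {f (A \<union> B) + f (A \<inter> B) - f A - f B | A B. True}"

definition dlk :: "nat \<Rightarrow> nat \<Rightarrow> ('a::finite set \<Rightarrow> real) \<Rightarrow> real" where
  "dlk l k f = Max {f (A \<union> B \<union> {s}) - f (A \<union> B) - f (A \<union> {s}) + f A
                    | A B s. card A = l \<and> card B = k}"

definition Dsub :: "('a::finite set \<Rightarrow> real) \<Rightarrow> real" where
  "Dsub f = Max {dlk l k f | l k. l < card (UNIV::'a set) \<and> k \<le> card (UNIV::'a set)}"

definition deltaLK :: "nat \<Rightarrow> nat \<Rightarrow> ('a::finite set \<Rightarrow> real) \<Rightarrow> real" where
  "deltaLK l K f = (\<Sum>k<K. dlk l k f)"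

definition DeltaLK :: "nat \<Rightarrow> nat \<Rightarrow> ('a::finite set \<Rightarrow> real) \<Rightarrow> real" where
  "DeltaLK L K f = Max {deltaLK l K f | l. l \<le> L}"

definition supnorm :: "('a::finite set \<Rightarrow> real) \<Rightarrow> real" where
  "supnorm h = Max ((\<lambda>S. \<bar>h S\<bar>) ` UNIV)"

end

theory Submission
  imports Defs
begin


lemma max_sub:
  fixes F G H :: "'i \<Rightarrow> real"
  assumes "finite I" "I \<noteq> {}" "\<And>i. i \<in> I \<Longrightarrow> H i \<le> F i + G i"
  shows "Max (H ` I) \<le> Max (F ` I) + Max (G ` I)"
proof -
  have "\<forall>x\<in>H ` I. x \<le> Max (F ` I) + Max (G ` I)"
  proof
    fix x assume "x \<in> H ` I"
    then obtain i where i: "i \<in> I" "x = H i" by auto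
    have "F i \<le> Max (F ` I)" "G i \<le> Max (G ` I)" using i assms by auto
    then show "x \<le> Max (F ` I) + Max (G ` I)" using assms(3)[OF i(1)] i by linarith
  qed
  then show ?thesis using assms by (simp add: Max_le_iff)
qed

lemma max_scale:
  fixes F H :: "'i \<Rightarrow> real"
  assumes "finite I" "I \<noteq> {}" "\<And>i. i \<in> I \<Longrightarrow> H i = \<alpha> * F i" "0 \<le> \<alpha>"
  shows "\<alpha> * Max (F ` I) = Max (H ` I)"
proof -
  have m: "mono ((*) \<alpha>)" using assms(4) by (simp add: mono_def mult_left_mono)
  have "H ` I = (*) \<alpha> ` (F ` I)" using assms(3) by (auto simp: image_iff)
  then show ?thesis using mono_Max_commute[OF m, of "F ` I"] assms(1,2) by simp
qed

definition ex_E :: "('a set \<Rightarrow> real) \<Rightarrow> 'a set \<times> 'a set \<Rightarrow> real" where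
  "ex_E f = (\<lambda>(A,B). f (A \<union> B) + f (A \<inter> B) - f A - f B)"

definition ex_d :: "('a set \<Rightarrow> real) \<Rightarrow> 'a set \<times> 'a set \<times> 'a \<Rightarrow> real" where
  "ex_d f = (\<lambda>(A,B,s). f (A \<union> B \<union> {s}) - f (A \<union> B) - f (A \<union> {s}) + f A)"

definition Idx :: "nat \<Rightarrow> nat \<Rightarrow> ('a set \<times> 'a set \<times> 'a) set" where
  "Idx l k = {(A,B,s). card A = l \<and> card B = k}"

lemma Esub_alt: "Esub f = Max (ex_E f ` UNIV)"
  unfolding Esub_def ex_E_def by (rule arg_cong[where f=Max]) auto

lemma dlk_alt: "dlk l k f = Max (ex_d f ` Idx l k)"
  unfolding dlk_def ex_d_def Idx_def by (rule arg_cong[where f=Max]) force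

lemma Dsub_alt: "Dsub f = Max ((\<lambda>(l,k). dlk l k f) ` {(l,k). l < card (UNIV::'a set) \<and> k \<le> card (UNIV::'a set)})"
  for f :: "'a::finite set \<Rightarrow> real"
  unfolding Dsub_def by (rule arg_cong[where f=Max]) force

lemma DeltaLK_alt: "DeltaLK L K f = Max ((\<lambda>l. deltaLK l K f) ` {..L})"
  unfolding DeltaLK_def by (rule arg_cong[where f=Max]) force

lemma Idx_ne: assumes "l \<le> card (UNIV::'a::finite set)" "k \<le> card (UNIV::'a set)"
  shows "Idx l k \<noteq> ({} :: ('a set \<times> 'a set \<times> 'a) set)"
proof -
  obtain A :: "'a set" where "card A = l" using obtain_subset_with_card_n[OF assms(1)] by metis
  moreover obtain B :: "'a set" where "card B = k" using obtain_subset_with_card_n[OF assms(2)] by metis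
  ultimately have "(A, B, undefined) \<in> Idx l k" unfolding Idx_def by simp
  then show ?thesis by blast
qed

lemma Idx_fin: "finite (Idx l k :: ('a::finite set \<times> 'a set \<times> 'a) set)" by simp

lemma dlk_sub: assumes "l \<le> card (UNIV::'a::finite set)" "k \<le> card (UNIV::'a set)"
  shows "dlk l k (\<lambda>S. f1 S + f2 S) \<le> dlk l k f1 + dlk l k (f2 :: 'a set \<Rightarrow> real)"
  unfolding dlk_alt using Idx_ne[OF assms]
  by (intro max_sub) (auto simp: ex_d_def)

lemma dlk_scale: assumes "l \<le> card (UNIV::'a::finite set)" "k \<le> card (UNIV::'a set)" "0 \<le> \<alpha>"
  shows "\<alpha> * dlk l k f = dlk l k (\<lambda>S. \<alpha> * (f :: 'a set \<Rightarrow> real) S)"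
  unfolding dlk_alt using Idx_ne[OF assms(1,2)] assms(3)
  by (intro max_scale) (auto simp: ex_d_def algebra_simps)

lemma Esub_sub: "Esub (\<lambda>S. f1 S + f2 S) \<le> Esub f1 + Esub (f2 :: 'a::finite set \<Rightarrow> real)"
  unfolding Esub_alt by (intro max_sub) (auto simp: ex_E_def)

lemma Esub_scale: "0 \<le> \<alpha> \<Longrightarrow> \<alpha> * Esub f = Esub (\<lambda>S. \<alpha> * (f :: 'a::finite set \<Rightarrow> real) S)"
  unfolding Esub_alt by (intro max_scale) (auto simp: ex_E_def algebra_simps)

lemma card_pos: "0 < card (UNIV::'a::finite set)" by (simp add: card_gt_0_iff)

lemma Dsub_sub: "Dsub (\<lambda>S. f1 S + f2 S) \<le> Dsub f1 + Dsub (f2 :: 'a::finite set \<Rightarrow> real)"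
  unfolding Dsub_alt
proof (intro max_sub)
  show "finite {(l, k). l < card (UNIV::'a set) \<and> k \<le> card (UNIV::'a set)}"
    by (rule finite_subset[of _ "{..<card (UNIV::'a set)} \<times> {..card (UNIV::'a set)}"]) auto
  show "{(l, k). l < card (UNIV::'a set) \<and> k \<le> card (UNIV::'a set)} \<noteq> {}"
    using card_pos[where 'a='a] by blast
qed (auto intro: dlk_sub)

lemma Dsub_scale: "0 \<le> \<alpha> \<Longrightarrow> \<alpha> * Dsub f = Dsub (\<lambda>S. \<alpha> * (f :: 'a::finite set \<Rightarrow> real) S)"
  unfolding Dsub_alt
proof (intro max_scale)
  show "finite {(l, k). l < card (UNIV::'a set) \<and> k \<le> card (UNIV::'a set)}"
    by (rule finite_subset[of _ "{..<card (UNIV::'a set)} \<times> {..card (UNIV::'a set)}"]) auto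
  show "{(l, k). l < card (UNIV::'a set) \<and> k \<le> card (UNIV::'a set)} \<noteq> {}"
    using card_pos[where 'a='a] by blast
qed (auto intro!: dlk_scale[symmetric])

lemma DeltaLK_sub: assumes "L < card (UNIV::'a::finite set)" "K \<le> card (UNIV::'a set)"
  shows "DeltaLK L K (\<lambda>S. f1 S + f2 S) \<le> DeltaLK L K f1 + DeltaLK L K (f2 :: 'a set \<Rightarrow> real)"
  unfolding DeltaLK_alt
proof (intro max_sub)
  fix l assume l: "l \<in> {..L}"
  show "deltaLK l K (\<lambda>S. f1 S + f2 S) \<le> deltaLK l K f1 + deltaLK l K f2"
    unfolding deltaLK_def sum.distrib[symmetric]
    by (rule sum_mono, rule dlk_sub) (use l assms in auto)
qed auto

lemma DeltaLK_scale: assumes "L < card (UNIV::'a::finite set)" "K \<le> card (UNIV::'a set)" "0 \<le> \<alpha>"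
  shows "\<alpha> * DeltaLK L K f = DeltaLK L K (\<lambda>S. \<alpha> * (f :: 'a set \<Rightarrow> real) S)"
  unfolding DeltaLK_alt
proof (intro max_scale)
  fix l assume l: "l \<in> {..L}"
  show "deltaLK l K (\<lambda>S. \<alpha> * f S) = \<alpha> * deltaLK l K f"
    unfolding deltaLK_def sum_distrib_left
    by (rule sum.cong, simp, rule dlk_scale[symmetric]) (use l assms in auto)
qed (use assms in auto)


lemma sn: "\<bar>g S - f S\<bar> \<le> supnorm (\<lambda>S. g S - (f :: 'a::finite set \<Rightarrow> real) S)"
  unfolding supnorm_def by (rule Max_ge) auto

lemma exE_g: assumes "submodular_sf g" shows "ex_E g x \<le> 0"
proof -
  obtain A B where x: "x = (A,B)" by (cases x) auto
  show ?thesis using assms unfolding submodular_sf_def ex_E_def x by (simp add: algebra_simps)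
qed

lemma exd_g: assumes "submodular_sf g" "increasing_sf g" shows "ex_d g x \<le> 0"
proof -
  obtain A B s where x: "x = (A,B,s)" by (cases x) auto
  have e: "(A \<union> B) \<union> (A \<union> {s}) = A \<union> B \<union> {s}" by auto
  have "g (A \<union> B \<union> {s}) + g ((A \<union> B) \<inter> (A \<union> {s})) \<le> g (A \<union> B) + g (A \<union> {s})"
    using assms(1) unfolding submodular_sf_def by (metis e)
  moreover have "g A \<le> g ((A \<union> B) \<inter> (A \<union> {s}))"
  proof -
    have "A \<subseteq> (A \<union> B) \<inter> (A \<union> {s})" by auto
    then show ?thesis using assms(2) unfolding increasing_sf_def by blast
  qed
  ultimately show ?thesis unfolding x ex_d_def by simp
qed

lemma exE_diff: "ex_E f x \<le> ex_E g x + 4 * supnorm (\<lambda>S. g S - (f :: 'a::finite set \<Rightarrow> real) S)"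
proof -
  obtain A B where x: "x = (A,B)" by (cases x) auto
  show ?thesis unfolding x ex_E_def
    using sn[of g "A \<union> B" f] sn[of g "A \<inter> B" f] sn[of g A f] sn[of g B f] by (simp add: abs_le_iff)
qed

lemma exd_diff: "ex_d f x \<le> ex_d g x + 4 * supnorm (\<lambda>S. g S - (f :: 'a::finite set \<Rightarrow> real) S)"
proof -
  obtain A B s where x: "x = (A,B,s)" by (cases x) auto
  show ?thesis unfolding x ex_d_def
    using sn[of g "A \<union> B \<union> {s}" f] sn[of g "A \<union> B" f] sn[of g "A \<union> {s}" f] sn[of g A f]
    by (simp add: abs_le_iff)
qed

lemma dlk_bound: assumes "l \<le> card (UNIV::'a::finite set)" "k \<le> card (UNIV::'a set)"
  "submodular_sf g" "increasing_sf g"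
  shows "dlk l k f \<le> 4 * supnorm (\<lambda>S. g S - (f :: 'a set \<Rightarrow> real) S)"
proof -
  have "dlk l k f \<in> ex_d f ` Idx l k" unfolding dlk_alt using Idx_ne[OF assms(1,2)]
    by (intro Max_in) auto
  then obtain x where "dlk l k f = ex_d f x" by auto
  then show ?thesis using exd_g[OF assms(3,4), of x] exd_diff[of f x g] by linarith
qed

lemma Esub_bound: assumes "submodular_sf g"
  shows "Esub f \<le> 4 * supnorm (\<lambda>S. g S - (f :: 'a::finite set \<Rightarrow> real) S)"
proof -
  have "Esub f \<in> ex_E f ` UNIV" unfolding Esub_alt by (intro Max_in) auto
  then obtain x where "Esub f = ex_E f x" by auto
  then show ?thesis using exE_g[OF assms(1), of x] exE_diff[of f x g] by linarith
qed

lemma Dsub_bound: assumes "submodular_sf g" "increasing_sf g"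
  shows "Dsub f \<le> 4 * supnorm (\<lambda>S. g S - (f :: 'a::finite set \<Rightarrow> real) S)"
proof -
  let ?I = "{(l,k). l < card (UNIV::'a set) \<and> k \<le> card (UNIV::'a set)}"
  have "finite ?I"
    by (rule finite_subset[of _ "{..<card (UNIV::'a set)} \<times> {..card (UNIV::'a set)}"]) auto
  moreover have "?I \<noteq> {}" using card_pos[where 'a='a] by blast
  ultimately have "Dsub f \<in> (\<lambda>(l,k). dlk l k f) ` ?I" unfolding Dsub_alt by (intro Max_in) auto
  then obtain l k where "l < card (UNIV::'a set)" "k \<le> card (UNIV::'a set)" "Dsub f = dlk l k f" by auto
  then show ?thesis using dlk_bound[OF _ _ assms, of l k f] by simp
qed

theorem mainTheorem1:
  fixes \<zeta> :: "('a::finite set \<Rightarrow> real) \<Rightarrow> real"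
  assumes cases: "\<zeta> = Esub \<or> \<zeta> = Dsub
     \<or> (\<exists>l k. l < card (UNIV::'a set) \<and> k \<le> card (UNIV::'a set) \<and> \<zeta> = dlk l k)
     \<or> (\<exists>L K. L < card (UNIV::'a set) \<and> 1 \<le> K \<and> K \<le> card (UNIV::'a set) \<and> \<zeta> = DeltaLK L K)"
  shows "(\<forall>f1 f2. Fplus f1 \<longrightarrow> Fplus f2 \<longrightarrow> \<zeta> (\<lambda>S. f1 S + f2 S) \<le> \<zeta> f1 + \<zeta> f2)
       \<and> (\<forall>f (\<alpha>::real). Fplus f \<longrightarrow> 0 \<le> \<alpha> \<longrightarrow> \<alpha> * \<zeta> f = \<zeta> (\<lambda>S. \<alpha> * f S))
       \<and> ((\<zeta> = Esub \<or> \<zeta> = Dsub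
            \<or> (\<exists>l k. l < card (UNIV::'a set) \<and> k \<le> card (UNIV::'a set) \<and> \<zeta> = dlk l k)) \<longrightarrow>
          (\<forall>f \<epsilon>. Fplus f \<longrightarrow> \<not> submodular_sf f \<longrightarrow> 0 \<le> \<epsilon> \<longrightarrow> \<epsilon> < \<zeta> f \<longrightarrow>
             \<not> (\<exists>g. nonneg_sf g \<and> increasing_sf g \<and> submodular_sf g
                    \<and> supnorm (\<lambda>S. g S - f S) < \<epsilon> / 4)))"
proof -
  have P1: "\<zeta> (\<lambda>S. f1 S + f2 S) \<le> \<zeta> f1 + \<zeta> f2" for f1 f2
    using cases by (auto intro: Esub_sub Dsub_sub dlk_sub DeltaLK_sub)
  have P2: "\<alpha> * \<zeta> f = \<zeta> (\<lambda>S. \<alpha> * f S)" if "0 \<le> \<alpha>" for f \<alpha>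
    using cases that by (auto intro: Esub_scale Dsub_scale dlk_scale DeltaLK_scale)
  have P3: "\<zeta> f \<le> 4 * supnorm (\<lambda>S. g S - f S)"
    if "\<zeta> = Esub \<or> \<zeta> = Dsub
            \<or> (\<exists>l k. l < card (UNIV::'a set) \<and> k \<le> card (UNIV::'a set) \<and> \<zeta> = dlk l k)"
       "submodular_sf g" "increasing_sf g" for f g
    using that by (auto intro: Esub_bound Dsub_bound dlk_bound)
  show ?thesis
  proof (intro conjI allI impI)
    show "\<zeta> (\<lambda>S. f1 S + f2 S) \<le> \<zeta> f1 + \<zeta> f2" for f1 f2 by (rule P1)
    show "\<alpha> * \<zeta> f = \<zeta> (\<lambda>S. \<alpha> * f S)" if "0 \<le> \<alpha>" for f \<alpha> using P2 that by blast
  next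
    fix f \<epsilon>
    assume h: "\<zeta> = Esub \<or> \<zeta> = Dsub
            \<or> (\<exists>l k. l < card (UNIV::'a set) \<and> k \<le> card (UNIV::'a set) \<and> \<zeta> = dlk l k)"
      and e: "\<epsilon> < \<zeta> f"
    show "\<not> (\<exists>g. nonneg_sf g \<and> increasing_sf g \<and> submodular_sf g
                    \<and> supnorm (\<lambda>S. g S - f S) < \<epsilon> / 4)"
    proof
      assume "\<exists>g. nonneg_sf g \<and> increasing_sf g \<and> submodular_sf g
                    \<and> supnorm (\<lambda>S. g S - f S) < \<epsilon> / 4"
      then obtain g where g: "increasing_sf g" "submodular_sf g" "supnorm (\<lambda>S. g S - f S) < \<epsilon> / 4"
        by blast
      show False using P3[OF h g(2,1), of f] g(3) e by linarith
    qed
  qed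
qed

end
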